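(* Let $\Phi=\{\varphi_j\}_{j=1}^n\subset\mathbb{C}^d$ be a doubly transitive (i.e. doubly covariant) equiangular tight frame with $n>d$. Then for all pairwise distinct $j,k,\ell\in\{1,\dots,n\}$ there exists a $2n$-th root of unity $\zeta_{j,k,\ell}$ such that \[\langle\varphi_j,\varphi_k\rangle\langle\varphi_k,\varphi_\ell\rangle\langle\varphi_\ell,\varphi_j\rangle=\zeta_{j,k,\ell}\left(\frac{n-d}{d(n-1)}\right)^{3/2}.\]
   Context: A set $\Phi=\{\varphi_j\}_{j=1}^n\subset\mathbb{C}^d$ is an equiangular tight frame (ETF) if (1) for all $x\in\mathbb{C}^d$, $x=\frac{d}{n}\sum_{j=1}^n\langle x,\varphi_j\rangle\varphi_j$; (2) $\|\varphi_j\|=1$ for all $j$; (3) there is $\alpha\ge 0$ with $|\langle\varphi_j,\varphi_k\rangle|=\alpha$ for all $j\neq k$. Let $G$ be the group of unitary operators $U$ on $\mathbb{C}^d$ such that there is a permutation $\sigma$ of $\{1,\dots,n\}$ with $U\varphi_j\varphi_j^*U^*=\varphi_{\sigma(j)}\varphi_{\sigma(j)}^*$ for all $j$; the symmetry group of $\Phi$ is $G/S^1$, which acts on $\{1,\dots,n\}$ via these permutations. $\Phi$ is doubly transitive (doubly covariant) if this action is $2$-transitive, i.e. maps every ordered pair of distinct indices to every ordered pair of distinct indices. *)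

theory Defs
  imports "HOL-Analysis.Analysis" "HOL-Combinatorics.Permutations"
begin

text \<open>Vectors in C^d are represented as complex ^ 'd, with d = CARD('d).
  The inner product is linear in the first argument, conjugate-linear in the second.\<close>

definition cinner :: "complex ^ 'd \<Rightarrow> complex ^ 'd \<Rightarrow> complex" where
  "cinner x y = (\<Sum>i\<in>UNIV. x $ i * cnj (y $ i))"

definition cnorm :: "complex ^ 'd \<Rightarrow> real" where
  "cnorm x = sqrt (Re (cinner x x))"

definition adjoint_mat :: "complex ^ 'd ^ 'd \<Rightarrow> complex ^ 'd ^ 'd" where
  "adjoint_mat U = (\<chi> i j. cnj (U $ j $ i))"

definition unitary_mat :: "complex ^ 'd ^ 'd \<Rightarrow> bool" where
  "unitary_mat U \<longleftrightarrow> U ** adjoint_mat U = mat 1 \<and> adjoint_mat U ** U = mat 1"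

definition outer :: "complex ^ 'd \<Rightarrow> complex ^ 'd ^ 'd" where
  "outer v = (\<chi> i j. v $ i * cnj (v $ j))"

definition is_ETF :: "nat \<Rightarrow> (nat \<Rightarrow> complex ^ 'd) \<Rightarrow> bool" where
  "is_ETF n \<phi> \<longleftrightarrow>
     (\<forall>x::complex^'d. x = (\<Sum>j\<in>{1..n}. (complex_of_real (real CARD('d) / real n) * cinner x (\<phi> j)) *s \<phi> j)) \<and>
     (\<forall>j\<in>{1..n}. cnorm (\<phi> j) = 1) \<and>
     (\<exists>\<alpha>::real. \<alpha> \<ge> 0 \<and> (\<forall>j\<in>{1..n}. \<forall>k\<in>{1..n}. j \<noteq> k \<longrightarrow> cmod (cinner (\<phi> j) (\<phi> k)) = \<alpha>))"

definition sym_unitary :: "nat \<Rightarrow> (nat \<Rightarrow> complex ^ 'd) \<Rightarrow> complex ^ 'd ^ 'd \<Rightarrow> (nat \<Rightarrow> nat) \<Rightarrow> bool" where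
  "sym_unitary n \<phi> U \<sigma> \<longleftrightarrow> unitary_mat U \<and> \<sigma> permutes {1..n} \<and>
     (\<forall>j\<in>{1..n}. U ** outer (\<phi> j) ** adjoint_mat U = outer (\<phi> (\<sigma> j)))"

definition doubly_transitive :: "nat \<Rightarrow> (nat \<Rightarrow> complex ^ 'd) \<Rightarrow> bool" where
  "doubly_transitive n \<phi> \<longleftrightarrow>
     (\<forall>j\<in>{1..n}. \<forall>k\<in>{1..n}. \<forall>j'\<in>{1..n}. \<forall>k'\<in>{1..n}. j \<noteq> k \<longrightarrow> j' \<noteq> k' \<longrightarrow>
        (\<exists>U \<sigma>. sym_unitary n \<phi> U \<sigma> \<and> \<sigma> j = j' \<and> \<sigma> k = k'))"

end

theory Submission
  imports Defs
begin

lemma cinner_cnj: "cnj (cinner x y) = cinner y x"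
  unfolding cinner_def by (simp add: mult.commute)

lemma cinner_sum_left: "cinner (sum f A) y = (\<Sum>k\<in>A. cinner (f k) y)"
  unfolding cinner_def by (simp add: sum_distrib_right sum.swap[of _ A])

lemma cinner_smult_left: "cinner (c *s x) y = c * cinner x y"
  unfolding cinner_def by (simp add: sum_distrib_left mult.assoc)

lemma cinner_smult_right: "cinner x (c *s y) = cnj c * cinner x y"
  unfolding cinner_def by (simp add: sum_distrib_left mult_ac)

lemma cinner_adj: "cinner (U *v x) z = cinner x (adjoint_mat U *v z)"
proof -
  have "cinner (U *v x) z = (\<Sum>i\<in>UNIV. \<Sum>a\<in>UNIV. U $ i $ a * x $ a * cnj (z $ i))"
    unfolding cinner_def matrix_vector_mult_def by (simp add: sum_distrib_right)
  also have "\<dots> = (\<Sum>a\<in>UNIV. \<Sum>i\<in>UNIV. U $ i $ a * x $ a * cnj (z $ i))"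
    by (rule sum.swap)
  also have "\<dots> = cinner x (adjoint_mat U *v z)"
    unfolding cinner_def adjoint_mat_def matrix_vector_mult_def
    by (simp add: sum_distrib_left mult_ac)
  finally show ?thesis .
qed

lemma cinner_unitary:
  assumes "unitary_mat U" shows "cinner (U *v x) (U *v y) = cinner x y"
  using assms unfolding unitary_mat_def
  by (simp add: cinner_adj matrix_vector_mul_assoc)

lemma outer_conj: "U ** outer v ** adjoint_mat U = outer (U *v v)"
  unfolding outer_def adjoint_mat_def matrix_matrix_mult_def matrix_vector_mult_def
  by (simp add: vec_eq_iff sum_distrib_left sum_distrib_right mult_ac)

lemma outer_mulv: "outer u *v v = cinner v u *s u"
  unfolding outer_def matrix_vector_mult_def cinner_def
  by (simp add: vec_eq_iff sum_distrib_left mult_ac)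

lemma outer_eq:
  assumes "outer u = outer v" "cinner v v = 1"
  shows "\<exists>t. cmod t = 1 \<and> v = t *s u"
proof -
  define c where "c = cinner v u"
  have "v = outer v *v v" using assms(2) by (simp only: outer_mulv vector_smult_lid)
  also have "\<dots> = outer u *v v" using assms(1) by (simp only:)
  also have "\<dots> = c *s u" unfolding c_def by (rule outer_mulv)
  finally have vt: "v = c *s u" .
  have h: "u $ i * cnj (u $ i) = v $ i * cnj (v $ i)" for i
  proof -
    have "outer u $ i $ i = outer v $ i $ i" using assms(1) by (simp only:)
    thus ?thesis unfolding outer_def by simp
  qed
  have "cinner u u = cinner v v"
    unfolding cinner_def using h by simp
  hence uu: "cinner u u = 1" using assms(2) by simp
  have "1 = cinner v v" using assms(2) by simp
  also have "\<dots> = cinner (c *s u) (c *s u)" using vt by (simp only:)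
  also have "\<dots> = c * cnj c * cinner u u"
    by (simp only: cinner_smult_left cinner_smult_right mult_ac)
  also have "\<dots> = of_real ((cmod c)^2)"
    using uu by (simp only: complex_norm_square mult_1_right)
  finally have "(cmod c)^2 = 1" by (metis of_real_eq_1_iff)
  hence "cmod c = 1" using norm_ge_zero[of c] by (auto simp add: power2_eq_1_iff)
  thus ?thesis using vt by blast
qed

definition Rp :: "nat \<Rightarrow> (nat \<Rightarrow> complex ^ 'd) \<Rightarrow> nat \<Rightarrow> complex" where
  "Rp n \<phi> p = (\<Prod>r\<in>{1..n}-{p}. cinner (\<phi> p) (\<phi> r))"

definition Qp :: "nat \<Rightarrow> (nat \<Rightarrow> complex ^ 'd) \<Rightarrow> nat \<Rightarrow> nat \<Rightarrow> complex" where
  "Qp n \<phi> p q = Rp n \<phi> p * cnj (Rp n \<phi> q) * cnj (cinner (\<phi> p) (\<phi> q)) ^ n"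

lemma sym_phase:
  assumes "sym_unitary n \<phi> U \<sigma>" "\<forall>j\<in>{1..n}. cinner (\<phi> j) (\<phi> j) = 1"
  shows "\<exists>t. \<forall>p\<in>{1..n}. cmod (t p) = 1 \<and> \<phi> (\<sigma> p) = t p *s (U *v \<phi> p)"
proof -
  have "\<forall>p\<in>{1..n}. \<exists>t. cmod t = 1 \<and> \<phi> (\<sigma> p) = t *s (U *v \<phi> p)"
  proof
    fix p assume p: "p \<in> {1..n}"
    have pm: "\<sigma> permutes {1..n}" using assms(1) unfolding sym_unitary_def by simp
    have s: "\<sigma> p \<in> {1..n}" using permutes_in_image[OF pm] p by simp
    have "outer (U *v \<phi> p) = outer (\<phi> (\<sigma> p))"
      using assms(1) p unfolding sym_unitary_def by (simp add: outer_conj)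
    thus "\<exists>t. cmod t = 1 \<and> \<phi> (\<sigma> p) = t *s (U *v \<phi> p)"
      using outer_eq assms(2) s by blast
  qed
  thus ?thesis by (rule bchoice)
qed

lemma sym_inner:
  assumes "sym_unitary n \<phi> U \<sigma>" "\<forall>j\<in>{1..n}. cinner (\<phi> j) (\<phi> j) = 1"
  shows "\<exists>t. (\<forall>p\<in>{1..n}. cmod (t p) = 1) \<and> (\<forall>p\<in>{1..n}. \<forall>q\<in>{1..n}.
     cinner (\<phi> (\<sigma> p)) (\<phi> (\<sigma> q)) = t p * cnj (t q) * cinner (\<phi> p) (\<phi> q))"
proof -
  obtain t where t: "\<forall>p\<in>{1..n}. cmod (t p) = 1 \<and> \<phi> (\<sigma> p) = t p *s (U *v \<phi> p)"
    using sym_phase[OF assms] by blast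
  have u: "unitary_mat U" using assms(1) unfolding sym_unitary_def by simp
  show ?thesis
    apply (rule exI[of _ t])
    using t by (simp add: cinner_smult_left cinner_smult_right cinner_unitary[OF u] mult_ac)
qed

lemma unit_cnj: "cmod t = 1 \<Longrightarrow> t * cnj t = 1"
  by (metis complex_norm_square of_real_1 power_one)

lemma R_rel:
  fixes f :: "nat \<Rightarrow> nat \<Rightarrow> complex"
  assumes perm: "\<sigma> permutes {1..n}" and p: "p \<in> {1..n}"
    and t: "\<forall>p\<in>{1..n}. cmod (t p) = 1"
    and rel: "\<forall>p\<in>{1..n}. \<forall>q\<in>{1..n}. f (\<sigma> p) (\<sigma> q) = t p * cnj (t q) * f p q"
  shows "(\<Prod>r\<in>{1..n}-{\<sigma> p}. f (\<sigma> p) r) = t p ^ n * (\<Prod>r\<in>{1..n}. cnj (t r)) * (\<Prod>r\<in>{1..n}-{p}. f p r)"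
proof -
  have bij: "bij_betw \<sigma> ({1..n}-{p}) ({1..n}-{\<sigma> p})"
  proof -
    have "bij_betw \<sigma> {1..n} {1..n}" using perm by (rule permutes_imp_bij)
    thus ?thesis by (rule bij_betw_DiffI) (use p permutes_in_image[OF perm] in auto)
  qed
  have "(\<Prod>r\<in>{1..n}-{\<sigma> p}. f (\<sigma> p) r) = (\<Prod>r\<in>{1..n}-{p}. f (\<sigma> p) (\<sigma> r))"
    using prod.reindex_bij_betw[OF bij, of "f (\<sigma> p)"] by simp
  also have "\<dots> = (\<Prod>r\<in>{1..n}-{p}. t p * cnj (t r) * f p r)"
    using rel p by (intro prod.cong) auto
  also have "\<dots> = t p ^ (n - 1) * (\<Prod>r\<in>{1..n}-{p}. cnj (t r)) * (\<Prod>r\<in>{1..n}-{p}. f p r)"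
    using p by (simp add: prod.distrib)
  also have "(\<Prod>r\<in>{1..n}-{p}. cnj (t r)) = t p * (\<Prod>r\<in>{1..n}. cnj (t r))"
  proof -
    have "(\<Prod>r\<in>{1..n}. cnj (t r)) = cnj (t p) * (\<Prod>r\<in>{1..n}-{p}. cnj (t r))"
      using p by (simp add: prod.remove)
    hence "t p * (\<Prod>r\<in>{1..n}. cnj (t r)) = (t p * cnj (t p)) * (\<Prod>r\<in>{1..n}-{p}. cnj (t r))"
      by (simp add: mult_ac)
    moreover have "t p * cnj (t p) = 1" using unit_cnj t p by auto
    ultimately show ?thesis by (metis mult_1)
  qed
  also have "t p ^ (n - 1) * (t p * (\<Prod>r\<in>{1..n}. cnj (t r))) = t p ^ n * (\<Prod>r\<in>{1..n}. cnj (t r))"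
  proof -
    have "n = Suc (n - 1)" using p by simp
    hence "t p ^ n = t p ^ (n-1) * t p" by (metis power_Suc2)
    thus ?thesis by (simp add: mult_ac)
  qed
  finally show ?thesis .
qed


lemma Q_rel:
  assumes perm: "\<sigma> permutes {1..n}" and p: "p \<in> {1..n}" and q: "q \<in> {1..n}"
    and t: "\<forall>p\<in>{1..n}. cmod (t p) = 1"
    and rel: "\<forall>p\<in>{1..n}. \<forall>q\<in>{1..n}.
       cinner (\<phi> (\<sigma> p)) (\<phi> (\<sigma> q)) = t p * cnj (t q) * cinner (\<phi> p) (\<phi> q)"
  shows "Qp n \<phi> (\<sigma> p) (\<sigma> q) = Qp n \<phi> p q"
proof -
  define P where "P = (\<Prod>r\<in>{1..n}. cnj (t r))"
  have Rs: "Rp n \<phi> (\<sigma> x) = t x ^ n * P * Rp n \<phi> x" if "x \<in> {1..n}" for x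
    using R_rel[OF perm that t, of "\<lambda>p q. cinner (\<phi> p) (\<phi> q)"] rel
    unfolding Rp_def P_def by simp
  have PP: "P * cnj P = 1"
  proof -
    have "P * cnj P = (\<Prod>r\<in>{1..n}. cnj (t r) * t r)"
      unfolding P_def by (simp add: prod.distrib)
    also have "\<dots> = 1" using t unit_cnj by (intro prod.neutral) (auto simp: mult.commute)
    finally show ?thesis .
  qed
  have tp: "t p * cnj (t p) = 1" and tq: "t q * cnj (t q) = 1" using t p q unit_cnj by auto
  have "Qp n \<phi> (\<sigma> p) (\<sigma> q) = t p ^ n * P * Rp n \<phi> p * cnj (t q ^ n * P * Rp n \<phi> q)
      * cnj (t p * cnj (t q) * cinner (\<phi> p) (\<phi> q)) ^ n"
    unfolding Qp_def using Rs[OF p] Rs[OF q] rel p q by simp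
  also have "\<dots> = (t p * cnj (t p)) ^ n * (t q * cnj (t q)) ^ n * (P * cnj P) * Qp n \<phi> p q"
    unfolding Qp_def by (simp add: power_mult_distrib mult_ac)
  also have "\<dots> = Qp n \<phi> p q" using tp tq PP by simp
  finally show ?thesis .
qed

lemma Q_swap: "Qp n \<phi> q p = cnj (Qp n \<phi> p q)"
  unfolding Qp_def by (simp add: cinner_cnj mult_ac)

lemma Q_triple: "Qp n \<phi> j k * Qp n \<phi> k l * Qp n \<phi> l j =
   (Rp n \<phi> j * cnj (Rp n \<phi> j)) * (Rp n \<phi> k * cnj (Rp n \<phi> k)) * (Rp n \<phi> l * cnj (Rp n \<phi> l))
   * cnj (cinner (\<phi> j) (\<phi> k) * cinner (\<phi> k) (\<phi> l) * cinner (\<phi> l) (\<phi> j)) ^ n"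
  unfolding Qp_def by (simp add: power_mult_distrib mult_ac)

lemma cinner_self: "cinner x x = of_real (\<Sum>i\<in>UNIV. (cmod (x$i))^2)"
  unfolding cinner_def of_real_sum complex_norm_square by simp


lemma pow32: fixes a::real assumes "a > 0" shows "(a^2) powr (3/2) = a^3"
proof -
  have "(a^2) powr (3/2) = (a powr 2) powr (3/2)" using assms by (simp add: powr_numeral)
  also have "\<dots> = a powr (2 * (3/2))" by (rule powr_powr)
  also have "\<dots> = a powr 3" by simp
  also have "\<dots> = a^3" using assms by (simp add: powr_numeral)
  finally show ?thesis .
qed

theorem mainTheorem2:
  fixes n :: nat and \<phi> :: "nat \<Rightarrow> complex ^ 'd"
  assumes "is_ETF n \<phi>" and "doubly_transitive n \<phi>" and "n > CARD('d)"
  shows "\<forall>j\<in>{1..n}. \<forall>k\<in>{1..n}. \<forall>l\<in>{1..n}. j \<noteq> k \<and> k \<noteq> l \<and> j \<noteq> l \<longrightarrow>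
    (\<exists>\<zeta>::complex. \<zeta> ^ (2 * n) = 1 \<and>
      cinner (\<phi> j) (\<phi> k) * cinner (\<phi> k) (\<phi> l) * cinner (\<phi> l) (\<phi> j) =
      \<zeta> * complex_of_real (((real n - real CARD('d)) / (real CARD('d) * (real n - 1))) powr (3/2)))"
proof (intro ballI impI)
  fix j k l assume j: "j \<in> {1..n}" and k: "k \<in> {1..n}" and l: "l \<in> {1..n}"
    and dist: "j \<noteq> k \<and> k \<noteq> l \<and> j \<noteq> l"
  define d where "d = CARD('d)"
  define I where "I = {1..n::nat}"
  have d0: "d > 0" unfolding d_def by simp
  have nd: "n > d" using assms(3) unfolding d_def by simp
  obtain \<alpha> where a0: "\<alpha> \<ge> 0" and al: "\<forall>p\<in>I. \<forall>q\<in>I. p \<noteq> q \<longrightarrow> cmod (cinner (\<phi> p) (\<phi> q)) = \<alpha>"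
    using assms(1) unfolding is_ETF_def I_def by blast
  have frame: "\<And>x::complex^'d. x = (\<Sum>j\<in>I. (complex_of_real (real d / real n) * cinner x (\<phi> j)) *s \<phi> j)"
    using assms(1) unfolding is_ETF_def I_def d_def by blast
  have nn: "\<forall>p\<in>I. cinner (\<phi> p) (\<phi> p) = 1"
  proof
    fix p assume "p \<in> I"
    hence "cnorm (\<phi> p) = 1" using assms(1) unfolding is_ETF_def I_def by blast
    hence "Re (cinner (\<phi> p) (\<phi> p)) = 1" unfolding cnorm_def
      by (metis real_sqrt_eq_1_iff)
    thus "cinner (\<phi> p) (\<phi> p) = 1" by (simp add: cinner_self)
  qed
  have W: "1 = real d / real n * (1 + (real n - 1) * \<alpha>^2)"
  proof -
    define c where "c = complex_of_real (real d / real n)"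
    have "cinner (\<phi> j) (\<phi> j) = cinner (\<Sum>k\<in>I. (c * cinner (\<phi> j) (\<phi> k)) *s \<phi> k) (\<phi> j)"
      using frame[of "\<phi> j"] unfolding c_def by simp
    also have "\<dots> = (\<Sum>k\<in>I. c * (cinner (\<phi> j) (\<phi> k) * cnj (cinner (\<phi> j) (\<phi> k))))"
      by (simp add: cinner_sum_left cinner_smult_left cinner_cnj mult.assoc)
    also have "\<dots> = (\<Sum>k\<in>I. c * of_real ((cmod (cinner (\<phi> j) (\<phi> k)))^2))"
      by (simp only: complex_norm_square)
    also have "\<dots> = c * of_real (\<Sum>k\<in>I. (cmod (cinner (\<phi> j) (\<phi> k)))^2)"
      by (simp add: sum_distrib_left)
    also have "(\<Sum>k\<in>I. (cmod (cinner (\<phi> j) (\<phi> k)))^2) = 1 + (real n - 1) * \<alpha>^2"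
    proof -
      have "(\<Sum>k\<in>I. (cmod (cinner (\<phi> j) (\<phi> k)))^2) = (cmod (cinner (\<phi> j) (\<phi> j)))^2
          + (\<Sum>k\<in>I-{j}. (cmod (cinner (\<phi> j) (\<phi> k)))^2)"
        using j unfolding I_def by (simp add: sum.remove)
      also have "(\<Sum>k\<in>I-{j}. (cmod (cinner (\<phi> j) (\<phi> k)))^2) = (\<Sum>k\<in>I-{j}. \<alpha>^2)"
        using al j unfolding I_def by (intro sum.cong) auto
      also have "\<dots> = (real n - 1) * \<alpha>^2" using j unfolding I_def by (simp add: of_nat_diff)
      finally show ?thesis using nn j unfolding I_def by simp
    qed
    finally have "(1::complex) = of_real (real d / real n * (1 + (real n - 1) * \<alpha>^2))"
      using nn j unfolding c_def I_def by simp
    thus ?thesis by (metis of_real_eq_1_iff)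
  qed
  have a2: "\<alpha>^2 = (real n - real d) / (real d * (real n - 1))"
  proof -
    have "real n > 1" using nd d0 by simp
    moreover have "real n = real d * (1 + (real n - 1) * \<alpha>^2)" using W nd
      by (simp add: field_simps)
    ultimately show ?thesis using d0 by (simp add: field_simps)
  qed
  have apos: "\<alpha> > 0"
  proof -
    have "real n - real d > 0" "real n - 1 > 0" using nd d0 by auto
    hence "\<alpha>^2 > 0" using a2 d0 by simp
    thus ?thesis using a0 by (metis less_eq_real_def power_zero_numeral zero_power2 not_less_iff_gr_or_eq power2_less_0)
  qed
  have a3: "((real n - real d) / (real d * (real n - 1))) powr (3/2) = \<alpha>^3"
    using pow32[OF apos] by (simp only: a2)
  have Qc: "Qp n \<phi> p q = Qp n \<phi> p' q'" if "p \<in> I" "q \<in> I" "p' \<in> I" "q' \<in> I" "p \<noteq> q" "p' \<noteq> q'"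
    for p q p' q'
  proof -
    have dt: "\<exists>U \<sigma>. sym_unitary n \<phi> U \<sigma> \<and> \<sigma> p = p' \<and> \<sigma> q = q'"
      using assms(2) that unfolding doubly_transitive_def I_def by (simp add: Ball_def)
    then obtain U \<sigma> where U: "sym_unitary n \<phi> U \<sigma>" and s: "\<sigma> p = p'" "\<sigma> q = q'"
      by blast
    obtain t where t: "\<forall>p\<in>{1..n}. cmod (t p) = 1" and rel: "\<forall>p\<in>{1..n}. \<forall>q\<in>{1..n}.
     cinner (\<phi> (\<sigma> p)) (\<phi> (\<sigma> q)) = t p * cnj (t q) * cinner (\<phi> p) (\<phi> q)"
      using sym_inner[OF U] nn unfolding I_def by blast
    have perm: "\<sigma> permutes {1..n}" using U unfolding sym_unitary_def by simp
    show ?thesis using Q_rel[OF perm _ _ t rel, of p q] that s unfolding I_def by simp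
  qed
  define Q where "Q = Qp n \<phi> j k"
  have QR: "Q \<in> \<real>"
  proof -
    have "Qp n \<phi> k j = Q" unfolding Q_def by (rule Qc) (use j k dist in \<open>auto simp: I_def\<close>)
    moreover have "cnj Q = Qp n \<phi> k j" unfolding Q_def by (rule Q_swap[symmetric])
    ultimately have "cnj Q = Q" by simp
    thus ?thesis by (simp add: Reals_cnj_iff)
  qed
  have Q3: "Qp n \<phi> j k * Qp n \<phi> k l * Qp n \<phi> l j = Q^3"
  proof -
    have "Qp n \<phi> k l = Q" "Qp n \<phi> l j = Q" unfolding Q_def
      by (rule Qc, use j k l dist in \<open>auto simp: I_def\<close>)+
    thus ?thesis unfolding Q_def by (simp add: power3_eq_cube)
  qed
  have Rnz: "Rp n \<phi> x \<noteq> 0" if "x \<in> I" for x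
  proof -
    have "\<forall>r\<in>I-{x}. cinner (\<phi> x) (\<phi> r) \<noteq> 0"
      using al that apos by fastforce
    thus ?thesis unfolding Rp_def I_def by simp
  qed
  define T where "T = cinner (\<phi> j) (\<phi> k) * cinner (\<phi> k) (\<phi> l) * cinner (\<phi> l) (\<phi> j)"
  define X where "X = (cmod (Rp n \<phi> j))^2 * (cmod (Rp n \<phi> k))^2 * (cmod (Rp n \<phi> l))^2"
  have X0: "X \<noteq> 0" unfolding X_def using Rnz j k l unfolding I_def by simp
  have "Q^3 = of_real X * cnj T ^ n"
    unfolding X_def T_def Q3[symmetric] Q_triple of_real_mult complex_norm_square by simp
  hence "cnj T ^ n = Q^3 / of_real X" using X0 by (simp add: field_simps)
  hence "cnj (T ^ n) \<in> \<real>" using QR by simp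
  hence TnR: "T ^ n \<in> \<real>" by (metis Reals_cnj_iff complex_cnj_cnj)
  have cT: "cmod T = \<alpha>^3" unfolding T_def using al j k l dist unfolding I_def
    by (simp add: norm_mult power3_eq_cube)
  define \<zeta> where "\<zeta> = T / of_real (\<alpha>^3)"
  have Teq: "T = \<zeta> * of_real (\<alpha>^3)" unfolding \<zeta>_def using apos by simp
  have zn: "cmod \<zeta> = 1" unfolding \<zeta>_def using cT apos by (simp add: norm_divide norm_power)
  have "\<zeta> ^ n \<in> \<real>" unfolding \<zeta>_def using TnR by (simp add: power_divide)
  then obtain r where r: "\<zeta> ^ n = of_real r" by (auto elim: Reals_cases)
  have "\<bar>r\<bar> = 1" using zn r by (metis norm_of_real norm_power power_one)
  hence "r^2 = 1" by (simp add: power2_eq_1_iff abs_if split: if_splits)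
  hence z2: "\<zeta> ^ (2 * n) = 1" using r by (metis mult.commute of_real_1 of_real_power power_mult)
  show "\<exists>\<zeta>::complex. \<zeta> ^ (2 * n) = 1 \<and>
      cinner (\<phi> j) (\<phi> k) * cinner (\<phi> k) (\<phi> l) * cinner (\<phi> l) (\<phi> j) =
      \<zeta> * complex_of_real (((real n - real CARD('d)) / (real CARD('d) * (real n - 1))) powr (3/2))"
    apply (rule exI[of _ \<zeta>])
    using z2 Teq a3 unfolding T_def d_def by simp
qed

end
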